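(* Let $n\ge1$, $d\ge0$ be integers and let $A=(\mathbf{a}_0,\dots,\mathbf{a}_N)$ be $N+1=N(n,d)$ distinct points of $\mathbb{R}^n$. Then: (1) For each fixed $p\in\{1,\dots,n\}$, $\operatorname{Det}V(A)$, viewed as a polynomial in the coordinates of $\mathbf{a}_0,\dots,\mathbf{a}_N$, is homogeneous of degree $N(n+1,d-1)$ with respect to the $p$-th coordinates of the points $\mathbf{a}_0,\dots,\mathbf{a}_N$. (2) If $\varphi:\mathbb{R}^n\to\mathbb{R}^n$ is a linear transformation with matrix $P$, then $\operatorname{Det}V(\varphi(A))=(\operatorname{Det}P)^{N(n+1,d-1)}\operatorname{Det}V(A)$, where $\varphi(A)=(\varphi(\mathbf{a}_0),\dots,\varphi(\mathbf{a}_N))$. (3) For every $\mathbf{v}\in\mathbb{R}^n$, $\operatorname{Det}V(A-\mathbf{v})=\operatorname{Det}V(A)$, where $A-\mathbf{v}=(\mathbf{a}_0-\mathbf{v},\dots,\mathbf{a}_N-\mathbf{v})$.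
   Context: $N(a,b):=\binom{a+b}{b}$, with $N(a,-1):=0$. $I(n,d)$ is the set of multi-indices $\mathbf{j}\in\mathbb{Z}_{\ge0}^n$ with $|\mathbf{j}|\le d$, and $\mathbf{x}^{\mathbf{j}}=x_1^{j_1}\cdots x_n^{j_n}$. With a fixed ordering $\mathbf{j}_0,\dots,\mathbf{j}_N$ of $I(n,d)$, the ($n$-dimensional) Vandermonde matrix of an ordered tuple $A=(\mathbf{a}_0,\dots,\mathbf{a}_N)$ is $V(A)=(\mathbf{a}_i^{\mathbf{j}_l})_{0\le i,l\le N}$ (rows indexed by points, columns by exponents). *)

theory Defs
  imports "Jordan_Normal_Form.Determinant"
begin

definition NN :: "nat \<Rightarrow> nat \<Rightarrow> nat" where
  "NN a b = (a + b) choose b"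

text \<open>NN_pred a b = N(a, b-1), with N(a,-1) = 0.\<close>
definition NN_pred :: "nat \<Rightarrow> nat \<Rightarrow> nat" where
  "NN_pred a b = (if b = 0 then 0 else NN a (b - 1))"

definition multi_idx :: "nat \<Rightarrow> nat \<Rightarrow> nat list set" where
  "multi_idx n d = {j. length j = n \<and> sum_list j \<le> d}"

definition monom_pow :: "real vec \<Rightarrow> nat list \<Rightarrow> real" where
  "monom_pow x j = (\<Prod>k<length j. (x $ k) ^ (j ! k))"

definition vandermonde :: "nat \<Rightarrow> (nat \<Rightarrow> nat list) \<Rightarrow> (nat \<Rightarrow> real vec) \<Rightarrow> real mat" where
  "vandermonde M e a = mat M M (\<lambda>(i, l). monom_pow (a i) (e l))"

definition scale_coord :: "nat \<Rightarrow> real \<Rightarrow> real vec \<Rightarrow> real vec" where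
  "scale_coord p t x = vec (dim_vec x) (\<lambda>k. if k = p then t * x $ k else x $ k)"

end

theory Submission
  imports Defs "Jordan_Normal_Form.Gauss_Jordan_Elimination"
begin
lemma multi_idx_finite: "finite (multi_idx n d)"
proof -
  have "multi_idx n d \<subseteq> {xs. set xs \<subseteq> {0..d} \<and> length xs = n}"
    unfolding multi_idx_def using member_le_sum_list by fastforce
  moreover have "finite {xs. set xs \<subseteq> {0..d} \<and> length xs = n}"
    by (rule finite_lists_length_eq) auto
  ultimately show ?thesis by (rule finite_subset)
qed

lemma multi_idx_Suc:
  "multi_idx (Suc n) d = (\<lambda>(k,j). k # j) ` (SIGMA k:{..d}. multi_idx n (d-k))"
proof (intro Set.set_eqI iffI)
  fix xs
  {
    assume "xs \<in> multi_idx (Suc n) d"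
    then obtain k j where "xs = k # j" "length j = n" "k + sum_list j \<le> d"
      unfolding multi_idx_def by (cases xs) auto
    then show "xs \<in> (\<lambda>(k,j). k # j) ` (SIGMA k:{..d}. multi_idx n (d-k))"
      unfolding multi_idx_def by (auto intro!: image_eqI[of _ _ "(k,j)"])
  }
qed (auto simp: multi_idx_def)

lemma card_multi_idx: "card (multi_idx n d) = NN n d"
proof (induction n arbitrary: d)
  case 0
  have "multi_idx 0 d = {[]}" unfolding multi_idx_def by auto
  then show ?case by (simp add: NN_def)
next
  case (Suc n)
  have inj: "inj_on (\<lambda>(k,j). k # j) (SIGMA k:{..d}. multi_idx n (d-k))"
    by (auto simp: inj_on_def)
  have "card (multi_idx (Suc n) d) = card (SIGMA k:{..d}. multi_idx n (d-k))"
    unfolding multi_idx_Suc by (rule card_image[OF inj])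
  also have "\<dots> = (\<Sum>k\<le>d. card (multi_idx n (d-k)))"
    by (rule card_SigmaI) (auto simp: multi_idx_finite)
  also have "\<dots> = (\<Sum>k\<le>d. (n + (d-k)) choose (d-k))"
    using Suc by (simp add: NN_def)
  also have "\<dots> = (\<Sum>k\<le>d. (n + k) choose k)"
    by (rule sum.reindex_bij_witness[of _ "\<lambda>k. d - k" "\<lambda>k. d - k"]) auto
  also have "\<dots> = NN (Suc n) d" by (simp add: sum_choose_lower NN_def)
  finally show ?case .
qed

lemma sum_coord_multi_idx:
  assumes "p < n"
  shows "(\<Sum>j\<in>multi_idx n d. j ! p) = NN_pred (n+1) d"
proof (induction d)
  case 0
  have "\<And>j. j \<in> multi_idx n 0 \<Longrightarrow> j ! p = 0"
    using assms unfolding multi_idx_def by (auto simp: elem_le_sum_list le_zero_eq)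
  then show ?case by (simp add: NN_pred_def)
next
  case (Suc d)
  have "(\<Sum>j\<in>multi_idx n (Suc d). j ! p) = (\<Sum>j\<in>{j\<in>multi_idx n (Suc d). j ! p \<noteq> 0}. j ! p)"
    apply (rule sum.mono_neutral_right)
    apply (simp add: multi_idx_finite)
    apply blast
    apply blast
    done
  also have "\<dots> = (\<Sum>j\<in>multi_idx n d. j ! p + 1)"
  proof (rule sum.reindex_bij_witness[of _ "\<lambda>j. j[p := j ! p + 1]" "\<lambda>j. j[p := j ! p - 1]"])
    fix j assume "j \<in> {j \<in> multi_idx n (Suc d). j ! p \<noteq> 0}"
    then have j: "length j = n" "sum_list j \<le> Suc d" "j ! p \<noteq> 0" unfolding multi_idx_def by auto
    have "sum_list (j[p := j ! p - 1]) = sum_list j - 1"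
      using j assms by (simp add: sum_list_update)
    then show "j[p := j ! p - 1] \<in> multi_idx n d" using j unfolding multi_idx_def by simp
    show "(j[p := j ! p - 1])[p := (j[p := j ! p - 1]) ! p + 1] = j" using j assms by simp
    show "(j[p := j ! p - 1]) ! p + 1 = j ! p" using j assms by simp
  next
    fix j assume "j \<in> multi_idx n d"
    then have j: "length j = n" "sum_list j \<le> d" unfolding multi_idx_def by auto
    have "sum_list (j[p := j ! p + 1]) = sum_list j + 1"
      using j assms by (simp add: sum_list_update)
    then show "j[p := j ! p + 1] \<in> {j \<in> multi_idx n (Suc d). j ! p \<noteq> 0}"
      using j assms unfolding multi_idx_def by simp
    show "(j[p := j ! p + 1])[p := (j[p := j ! p + 1]) ! p - 1] = j" using j assms by simp
  qed
  also have "\<dots> = NN_pred (n+1) d + NN n d"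
    using Suc by (simp add: sum_Suc card_multi_idx)
  also have "\<dots> = NN_pred (n+1) (Suc d)"
    by (cases d) (simp_all add: NN_pred_def NN_def)
  finally show ?case .
qed

lemma monom_mult:
  assumes "length j = length k"
  shows "monom_pow x j * monom_pow x k = monom_pow x (map2 (+) j k)"
  using assms unfolding monom_pow_def by (simp add: prod.distrib[symmetric] power_add)

lemma sum_list_map2: "length j = length k \<Longrightarrow> sum_list (map2 (+) j k) = sum_list j + sum_list (k::nat list)"
proof (induction j arbitrary: k)
  case (Cons a j) then show ?case by (cases k) auto
qed simp

lemma monom_zero: "monom_pow x (replicate n 0) = 1"
  unfolding monom_pow_def by simp

inductive pol :: "nat \<Rightarrow> nat \<Rightarrow> (real vec \<Rightarrow> real) \<Rightarrow> bool" for n d where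
  mon: "length j = n \<Longrightarrow> sum_list j \<le> d \<Longrightarrow> pol n d (\<lambda>x. monom_pow x j)"
| add: "pol n d g \<Longrightarrow> pol n d h \<Longrightarrow> pol n d (\<lambda>x. g x + h x)"
| smul: "pol n d g \<Longrightarrow> pol n d (\<lambda>x. c * g x)"
| cong: "pol n d g \<Longrightarrow> (\<forall>x. dim_vec x = n \<longrightarrow> g x = h x) \<Longrightarrow> pol n d h"

lemma pol_const: "pol n d (\<lambda>x. c)"
proof -
  have "pol n d (\<lambda>x. monom_pow x (replicate n 0))" by (rule pol.mon) (auto simp: sum_list_replicate)
  then have "pol n d (\<lambda>x. c * monom_pow x (replicate n 0))" by (rule pol.smul)
  then show ?thesis by (rule pol.cong) (simp add: monom_zero)
qed

lemma pol_mono: "pol n a g \<Longrightarrow> a \<le> b \<Longrightarrow> pol n b g"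
proof (induction rule: pol.induct)
  case (mon j) then show ?case by (intro pol.mon) auto
next
  case (add g h) then show ?case by (intro pol.add) auto
next
  case (smul g c) then show ?case by (intro pol.smul) auto
next
  case (cong g h) then show ?case by (meson pol.cong)
qed

lemma pol_mult_mon:
  assumes "pol n b h" "length j = n" "sum_list j \<le> a"
  shows "pol n (a + b) (\<lambda>x. monom_pow x j * h x)"
  using assms(1)
proof (induction rule: pol.induct)
  case (mon k)
  have "pol n (a + b) (\<lambda>x. monom_pow x (map2 (+) j k))"
    by (rule pol.mon) (use mon assms in \<open>auto simp: sum_list_map2\<close>)
  then show ?case by (rule pol.cong) (use mon assms in \<open>simp add: monom_mult\<close>)
next
  case (add g h)
  from pol.add[OF add.IH] show ?case by (rule pol.cong) (simp add: algebra_simps)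
next
  case (smul g c)
  from pol.smul[OF smul.IH, of c] show ?case by (rule pol.cong) (simp add: algebra_simps)
next
  case (cong g h)
  from cong.IH show ?case by (rule pol.cong) (use cong in auto)
qed

lemma pol_mult:
  assumes "pol n a g" "pol n b h"
  shows "pol n (a + b) (\<lambda>x. g x * h x)"
  using assms(1)
proof (induction rule: pol.induct)
  case (mon j)
  then show ?case using pol_mult_mon[OF assms(2)] by auto
next
  case (add g1 g2)
  from pol.add[OF add.IH] show ?case by (rule pol.cong) (simp add: algebra_simps)
next
  case (smul g c)
  from pol.smul[OF smul.IH, of c] show ?case by (rule pol.cong) (simp add: algebra_simps)
next
  case (cong g1 g2)
  from cong.IH show ?case by (rule pol.cong) (use cong in auto)
qed

lemma pol_power: "pol n a g \<Longrightarrow> pol n (a * m) (\<lambda>x. g x ^ m)"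
proof (induction m)
  case 0 then show ?case using pol_const[of n 0 1] by simp
next
  case (Suc m)
  from pol_mult[OF Suc.prems Suc.IH[OF Suc.prems]] show ?case
    by (simp add: algebra_simps)
qed

lemma pol_sum: "(\<And>i. i < (m::nat) \<Longrightarrow> pol n d (g i)) \<Longrightarrow> pol n d (\<lambda>x. \<Sum>i<m. g i x)"
proof (induction m)
  case 0 then show ?case using pol_const[of n d 0] by simp
next
  case (Suc m)
  have "pol n d (\<lambda>x. \<Sum>i<m. g i x)" by (rule Suc.IH) (use Suc.prems in auto)
  from pol.add[OF this Suc.prems[of m]] show ?case by simp
qed

lemma pol_prod: "(\<And>i. i < (m::nat) \<Longrightarrow> pol n (a i) (g i)) \<Longrightarrow> pol n (\<Sum>i<m. a i) (\<lambda>x. \<Prod>i<m. g i x)"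
proof (induction m)
  case 0 then show ?case using pol_const[of n 0 1] by simp
next
  case (Suc m)
  have "pol n (\<Sum>i<m. a i) (\<lambda>x. \<Prod>i<m. g i x)" by (rule Suc.IH) (use Suc.prems in auto)
  from pol_mult[OF this Suc.prems[of m]] show ?case by (simp add: mult.commute)
qed

lemma pol_coord:
  assumes "p < n"
  shows "pol n 1 (\<lambda>x. x $ p)"
proof -
  have "pol n 1 (\<lambda>x. monom_pow x ((replicate n 0)[p := 1]))"
    by (rule pol.mon) (use assms in \<open>simp_all add: sum_list_update\<close>)
  then show ?thesis
  proof (rule pol.cong, intro allI impI)
    fix x :: "real vec"
    have "monom_pow x ((replicate n 0)[p := 1]) = (\<Prod>k<n. if k = p then x $ p else 1)"
      unfolding monom_pow_def length_list_update length_replicate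
    proof (rule prod.cong)
      fix k assume "k \<in> {..<n}"
      then have k: "k < n" by simp
      show "x $ k ^ ((replicate n 0)[p := 1] ! k) = (if k = p then x $ p else 1)"
        using k assms by (cases "k = p") simp_all
    qed simp
    also have "\<dots> = x $ p" using assms by (simp add: prod.delta)
    finally show "monom_pow x ((replicate n 0)[p := 1]) = x $ p" .
  qed
qed

lemma pol_monom_comp:
  assumes coords: "\<And>k. k < n \<Longrightarrow> pol n 1 (\<lambda>x. f x $ k)"
    and j: "j \<in> multi_idx n d"
  shows "pol n d (\<lambda>x. monom_pow (f x) j)"
proof -
  from j have len: "length j = n" and sj: "sum_list j \<le> d" unfolding multi_idx_def by auto
  have "pol n (\<Sum>k<n. 1 * j ! k) (\<lambda>x. \<Prod>k<n. (f x $ k) ^ (j ! k))"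
    by (rule pol_prod, rule pol_power, rule coords)
  moreover have "(\<Sum>k<n. 1 * j ! k) = sum_list j"
    using len by (simp add: sum_list_sum_nth atLeast0LessThan)
  ultimately have "pol n (sum_list j) (\<lambda>x. \<Prod>k<n. (f x $ k) ^ (j ! k))" by simp
  then have "pol n d (\<lambda>x. \<Prod>k<n. (f x $ k) ^ (j ! k))"
    by (rule pol_mono[OF _ sj])
  then show ?thesis unfolding monom_pow_def len .
qed

lemma pol_repr:
  assumes e: "bij_betw e {..<(N::nat)} (multi_idx n d)" and "pol n d g"
  shows "\<exists>c. \<forall>x. dim_vec x = n \<longrightarrow> g x = (\<Sum>l<N. c l * monom_pow x (e l))"
  using assms(2)
proof (induction rule: pol.induct)
  case (mon j)
  then have "j \<in> multi_idx n d" unfolding multi_idx_def by auto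
  then obtain l0 where l0: "l0 < N" "e l0 = j"
    using e unfolding bij_betw_def by force
  have "(\<Sum>l<N. (if l = l0 then 1 else 0) * monom_pow x (e l)) = monom_pow x j" for x
  proof -
    have "(\<Sum>l<N. (if l = l0 then 1 else 0) * monom_pow x (e l)) = (\<Sum>l<N. if l = l0 then monom_pow x (e l) else 0)"
      by (intro sum.cong) auto
    also have "\<dots> = monom_pow x j" using l0 by (simp add: sum.delta)
    finally show ?thesis .
  qed
  then show ?case by (intro exI[of _ "\<lambda>l. if l = l0 then 1 else 0"]) simp
next
  case (add g h)
  then obtain c1 c2 where "\<forall>x. dim_vec x = n \<longrightarrow> g x = (\<Sum>l<N. c1 l * monom_pow x (e l))"
    "\<forall>x. dim_vec x = n \<longrightarrow> h x = (\<Sum>l<N. c2 l * monom_pow x (e l))" by blast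
  then show ?case
    by (intro exI[of _ "\<lambda>l. c1 l + c2 l"]) (simp add: sum.distrib distrib_right)
next
  case (smul g c)
  then obtain c1 where "\<forall>x. dim_vec x = n \<longrightarrow> g x = (\<Sum>l<N. c1 l * monom_pow x (e l))" by blast
  then show ?case
    by (intro exI[of _ "\<lambda>l. c * c1 l"]) (simp add: sum_distrib_left mult.assoc)
next
  case (cong g h)
  then show ?case by metis
qed

definition good :: "nat \<Rightarrow> (nat \<Rightarrow> nat list) \<Rightarrow> nat \<Rightarrow> (real vec \<Rightarrow> real vec) \<Rightarrow> real \<Rightarrow> bool" where
  "good N e n f k \<longleftrightarrow> (\<forall>b. (\<forall>i<N. dim_vec (b i) = n) \<longrightarrow>
     det (vandermonde N e (\<lambda>i. f (b i))) = k * det (vandermonde N e b))"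

lemma vandermonde_carrier: "vandermonde N e a \<in> carrier_mat N N"
  unfolding vandermonde_def by simp

lemma good_exists:
  assumes e: "bij_betw e {..<(N::nat)} (multi_idx n d)"
    and coords: "\<And>k. k < n \<Longrightarrow> pol n 1 (\<lambda>x. f x $ k)"
  shows "\<exists>k. good N e n f k"
proof -
  have "\<forall>l. \<exists>c. l < N \<longrightarrow> (\<forall>x. dim_vec x = n \<longrightarrow> monom_pow (f x) (e l) = (\<Sum>l'<N. c l' * monom_pow x (e l')))"
  proof (intro allI)
    fix l
    show "\<exists>c. l < N \<longrightarrow> (\<forall>x. dim_vec x = n \<longrightarrow> monom_pow (f x) (e l) = (\<Sum>l'<N. c l' * monom_pow x (e l')))"
    proof (cases "l < N")
      case True
      then have "e l \<in> multi_idx n d" using e unfolding bij_betw_def by auto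
      from pol_repr[OF e pol_monom_comp[OF coords this]] show ?thesis by blast
    qed simp
  qed
  then obtain cf where cf: "\<And>l x. l < N \<Longrightarrow> dim_vec x = n \<Longrightarrow>
      monom_pow (f x) (e l) = (\<Sum>l'<N. cf l l' * monom_pow x (e l'))"
    by metis
  define C where "C = mat N N (\<lambda>(l', l). cf l l')"
  have C: "C \<in> carrier_mat N N" unfolding C_def by simp
  have eq: "vandermonde N e (\<lambda>i. f (b i)) = vandermonde N e b * C"
    if b: "\<forall>i<N. dim_vec (b i) = n" for b
  proof (rule eq_matI)
    fix i l assume i: "i < dim_row (vandermonde N e b * C)" and l: "l < dim_col (vandermonde N e b * C)"
    then have iN: "i < N" and lN: "l < N" using C by (auto simp: vandermonde_def)
    have "(vandermonde N e b * C) $$ (i, l) = (\<Sum>l'<N. monom_pow (b i) (e l') * cf l l')"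
      using iN lN C by (simp add: vandermonde_def C_def scalar_prod_def atLeast0LessThan)
    also have "\<dots> = monom_pow (f (b i)) (e l)"
      using cf[OF lN] b iN by (simp add: mult.commute)
    finally show "vandermonde N e (\<lambda>i. f (b i)) $$ (i, l) = (vandermonde N e b * C) $$ (i, l)"
      using iN lN by (simp add: vandermonde_def)
  qed (use C in \<open>auto simp: vandermonde_def\<close>)
  show ?thesis
    unfolding good_def
    by (intro exI[of _ "det C"] allI impI)
      (simp add: eq det_mult[OF vandermonde_carrier C] mult.commute)
qed

lemma good_comp:
  assumes "good N e n f k1" "good N e n g k2"
    and "\<And>x. dim_vec x = n \<Longrightarrow> dim_vec (f x) = n"
  shows "good N e n (\<lambda>x. g (f x)) (k2 * k1)"
  using assms unfolding good_def by simp

lemma good_cong: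
  assumes "good N e n f k" "\<And>x. dim_vec x = n \<Longrightarrow> f x = g x"
  shows "good N e n g k"
proof -
  have "vandermonde N e (\<lambda>i. g (b i)) = vandermonde N e (\<lambda>i. f (b i))"
    if "\<forall>i<N. dim_vec (b i) = n" for b
    using that assms(2) unfolding vandermonde_def by (intro eq_matI) auto
  then show ?thesis using assms(1) unfolding good_def by simp
qed

lemma monom_scale:
  assumes "length j = n" "dim_vec x = n" "p < n"
  shows "monom_pow (scale_coord p t x) j = t ^ (j ! p) * monom_pow x j"
proof -
  have "monom_pow (scale_coord p t x) j = (\<Prod>k<n. (if k = p then t ^ (j ! p) else 1) * x $ k ^ (j ! k))"
    unfolding monom_pow_def scale_coord_def using assms
    by (intro prod.cong) (auto simp: power_mult_distrib)
  also have "\<dots> = (\<Prod>k<n. (if k = p then t ^ (j ! p) else 1)) * monom_pow x j"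
    unfolding monom_pow_def prod.distrib using assms by simp
  also have "\<dots> = t ^ (j ! p) * monom_pow x j" using assms by (simp add: prod.delta)
  finally show ?thesis .
qed

lemma good_scale:
  assumes e: "bij_betw e {..<NN n d} (multi_idx n d)" and p: "p < n"
  shows "good (NN n d) e n (scale_coord p t) (t ^ NN_pred (n + 1) d)"
proof -
  let ?N = "NN n d"
  define D where "D = mat ?N ?N (\<lambda>(i, j). if i = j then t ^ (e j ! p) else (0::real))"
  have D: "D \<in> carrier_mat ?N ?N" unfolding D_def by simp
  have len: "\<And>l. l < ?N \<Longrightarrow> length (e l) = n"
    using e unfolding bij_betw_def multi_idx_def by auto
  have eq: "vandermonde ?N e (\<lambda>i. scale_coord p t (b i)) = vandermonde ?N e b * D"
    if b: "\<forall>i<?N. dim_vec (b i) = n" for b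
  proof (rule eq_matI)
    fix i l assume i: "i < dim_row (vandermonde ?N e b * D)" and l: "l < dim_col (vandermonde ?N e b * D)"
    then have iN: "i < ?N" and lN: "l < ?N" using D by (auto simp: vandermonde_def)
    have "(vandermonde ?N e b * D) $$ (i, l) = (\<Sum>l'<?N. monom_pow (b i) (e l') * (if l' = l then t ^ (e l ! p) else 0))"
      using iN lN D by (simp add: vandermonde_def D_def scalar_prod_def atLeast0LessThan)
    also have "\<dots> = (\<Sum>l'<?N. if l' = l then monom_pow (b i) (e l) * t ^ (e l ! p) else 0)"
      by (intro sum.cong) auto
    also have "\<dots> = monom_pow (b i) (e l) * t ^ (e l ! p)" using lN by (simp add: sum.delta)
    also have "\<dots> = monom_pow (scale_coord p t (b i)) (e l)"
      using monom_scale[OF len[OF lN] _ p] b iN by simp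
    finally show "vandermonde ?N e (\<lambda>i. scale_coord p t (b i)) $$ (i, l) = (vandermonde ?N e b * D) $$ (i, l)"
      using iN lN by (simp add: vandermonde_def)
  qed (use D in \<open>auto simp: vandermonde_def\<close>)
  have "det D = (\<Prod>l<?N. t ^ (e l ! p))"
    by (subst det_upper_triangular[OF _ D]) (auto simp: D_def prod_list_diag_prod atLeast0LessThan)
  also have "\<dots> = t ^ (\<Sum>l<?N. e l ! p)" by (simp add: power_sum)
  also have "(\<Sum>l<?N. e l ! p) = (\<Sum>j\<in>multi_idx n d. j ! p)"
    using sum.reindex_bij_betw[OF e, of "\<lambda>j. j ! p"] by simp
  also have "\<dots> = NN_pred (n+1) d" by (rule sum_coord_multi_idx[OF p])
  finally have dD: "det D = t ^ NN_pred (n + 1) d" .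
  show ?thesis unfolding good_def
    by (auto simp: eq det_mult[OF vandermonde_carrier D] dD mult.commute)
qed

definition sh :: "nat \<Rightarrow> nat \<Rightarrow> real \<Rightarrow> real vec \<Rightarrow> real vec" where
  "sh k l c x = vec (dim_vec x) (\<lambda>i. if i = k then x $ i + c * x $ l else x $ i)"

definition sw :: "nat \<Rightarrow> nat \<Rightarrow> real vec \<Rightarrow> real vec" where
  "sw k l x = vec (dim_vec x) (\<lambda>i. if i = k then x $ l else if i = l then x $ k else x $ i)"

lemma pol_matvec:
  assumes "P \<in> carrier_mat n n" "k < n"
  shows "pol n 1 (\<lambda>x. (P *\<^sub>v x) $ k)"
proof -
  have "pol n 1 (\<lambda>x. \<Sum>m<n. P $$ (k, m) * x $ m)"
    by (intro pol_sum pol.smul pol_coord)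
  then show ?thesis
    by (rule pol.cong) (use assms in \<open>auto simp: scalar_prod_def atLeast0LessThan\<close>)
qed

lemma pol_scale: "p < n \<Longrightarrow> k < n \<Longrightarrow> pol n 1 (\<lambda>x. scale_coord p t x $ k)"
proof (cases "k = p")
  case True
  assume "k < n"
  from pol.smul[OF pol_coord[OF \<open>k < n\<close>], of t] show ?thesis
    by (rule pol.cong) (use True \<open>k < n\<close> in \<open>auto simp: scale_coord_def\<close>)
next
  case False
  assume "k < n"
  from pol_coord[OF \<open>k < n\<close>] show ?thesis
    by (rule pol.cong) (use False \<open>k < n\<close> in \<open>auto simp: scale_coord_def\<close>)
qed

lemma pol_sh: "l < n \<Longrightarrow> k' < n \<Longrightarrow> pol n 1 (\<lambda>x. sh k l c x $ k')"
proof (cases "k' = k")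
  case True
  assume "l < n" "k' < n"
  from pol.add[OF pol_coord[OF \<open>k' < n\<close>] pol.smul[OF pol_coord[OF \<open>l < n\<close>], of c]] show ?thesis
    by (rule pol.cong) (use True \<open>k' < n\<close> in \<open>auto simp: sh_def\<close>)
next
  case False
  assume "k' < n"
  from pol_coord[OF \<open>k' < n\<close>] show ?thesis
    by (rule pol.cong) (use False \<open>k' < n\<close> in \<open>auto simp: sh_def\<close>)
qed

lemma pol_tr: "v \<in> carrier_vec n \<Longrightarrow> k < n \<Longrightarrow> pol n 1 (\<lambda>x. (x - v) $ k)"
proof -
  assume v: "v \<in> carrier_vec n" and k: "k < n"
  from pol.add[OF pol_coord[OF k] pol_const[of n 1 "- v $ k"]] show ?thesis
    by (rule pol.cong) (use v k in auto)
qed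

lemma pol_hom: "k < n \<Longrightarrow> pol n 1 (\<lambda>x. (s \<cdot>\<^sub>v x) $ k)"
  using pol.smul[OF pol_coord, of k n s] by (rule pol.cong) auto

lemma good_unique:
  assumes "good N e n f k1" "good N e n f k2" "\<forall>i<N. dim_vec (B i) = n"
    "det (vandermonde N e B) \<noteq> 0"
  shows "k1 = k2"
proof -
  have "det (vandermonde N e (\<lambda>i. f (B i))) = k1 * det (vandermonde N e B)"
    using assms(1,3) unfolding good_def by blast
  moreover have "det (vandermonde N e (\<lambda>i. f (B i))) = k2 * det (vandermonde N e B)"
    using assms(2,3) unfolding good_def by blast
  ultimately show ?thesis using assms(4) by simp
qed

lemma good_id: "good N e n (\<lambda>x. x) 1"
  unfolding good_def by simp

lemma factor_one:
  assumes gf: "good N e n f kf" and gf': "good N e n f' kf'"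
    and gg: "good N e n g kg" and gh: "good N e n h kh"
    and df: "\<And>x. dim_vec x = n \<Longrightarrow> dim_vec (f x) = n"
    and dh: "\<And>x. dim_vec x = n \<Longrightarrow> dim_vec (h x) = n"
    and inv1: "\<And>x. dim_vec x = n \<Longrightarrow> f' (f x) = x"
    and inv2: "\<And>x. dim_vec x = n \<Longrightarrow> g (h x) = x"
    and conj: "\<And>x. dim_vec x = n \<Longrightarrow> f (f x) = g (f (h x))"
  shows "good N e n f 1"
proof (cases "\<exists>B. (\<forall>i<N. dim_vec (B i) = n) \<and> det (vandermonde N e B) \<noteq> 0")
  case True
  then obtain B where B: "\<forall>i<N. dim_vec (B i) = n" "det (vandermonde N e B) \<noteq> 0" by blast
  have "good N e n (\<lambda>x. x) (kf' * kf)"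
    by (rule good_cong[OF good_comp[OF gf gf' df]]) (use inv1 in auto)
  from good_unique[OF this good_id B] have 1: "kf' * kf = 1" .
  have "good N e n (\<lambda>x. x) (kg * kh)"
    by (rule good_cong[OF good_comp[OF gh gg dh]]) (use inv2 in auto)
  from good_unique[OF this good_id B] have 2: "kg * kh = 1" .
  have a: "good N e n (\<lambda>x. f (f x)) (kf * kf)" by (rule good_comp[OF gf gf df])
  have "good N e n (\<lambda>x. g (f (h x))) (kg * (kf * kh))"
    by (rule good_comp[OF good_comp[OF gh gf dh] gg]) (use df dh in auto)
  then have "good N e n (\<lambda>x. f (f x)) (kg * (kf * kh))"
    by (rule good_cong) (use conj in auto)
  from good_unique[OF a this B] have "kf * kf = kg * (kf * kh)" .
  also have "kg * (kf * kh) = kf * (kg * kh)" by (simp add: mult.left_commute)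
  finally have "kf * kf = kf * 1" using 2 by simp
  moreover have "kf \<noteq> 0" using 1 by auto
  ultimately have "kf = 1" by simp
  with gf show ?thesis by simp
next
  case False
  show ?thesis unfolding good_def
  proof (intro allI impI)
    fix b :: "nat \<Rightarrow> real vec" assume b: "\<forall>i<N. dim_vec (b i) = n"
    have h: "\<And>B. \<forall>i<N. dim_vec (B i) = n \<Longrightarrow> det (vandermonde N e B) = 0"
      using False by blast
    have "det (vandermonde N e (\<lambda>i. f (b i))) = 0" by (rule h) (use b df in simp)
    moreover have "det (vandermonde N e b) = 0" by (rule h) (use b in simp)
    ultimately show "det (vandermonde N e (\<lambda>i. f (b i))) = 1 * det (vandermonde N e b)" by simp
  qed
qed

lemma good_sh:
  assumes e: "bij_betw e {..<(N::nat)} (multi_idx n d)" and kl: "k \<noteq> l" "k < n" "l < n"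
  shows "good N e n (sh k l c) 1"
proof -
  have "\<exists>kf. good N e n (sh k l c) kf" by (rule good_exists[OF e]) (rule pol_sh[OF kl(3)])
  then obtain kf where gf: "good N e n (sh k l c) kf" by blast
  have "\<exists>kf'. good N e n (sh k l (-c)) kf'" by (rule good_exists[OF e]) (rule pol_sh[OF kl(3)])
  then obtain kf' where gf': "good N e n (sh k l (-c)) kf'" by blast
  have "\<exists>kg. good N e n (scale_coord l (1/2)) kg" by (rule good_exists[OF e]) (rule pol_scale[OF kl(3)])
  then obtain kg where gg: "good N e n (scale_coord l (1/2)) kg" by blast
  have "\<exists>kh. good N e n (scale_coord l 2) kh" by (rule good_exists[OF e]) (rule pol_scale[OF kl(3)])
  then obtain kh where gh: "good N e n (scale_coord l 2) kh" by blast
  show ?thesis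
  proof (rule factor_one[OF gf gf' gg gh])
    fix x :: "real vec" assume x: "dim_vec x = n"
    show "dim_vec (sh k l c x) = n" using x by (simp add: sh_def)
    show "dim_vec (scale_coord l 2 x) = n" using x by (simp add: scale_coord_def)
    show "sh k l (- c) (sh k l c x) = x"
      by (rule eq_vecI) (use kl x in \<open>simp_all add: sh_def\<close>)
    show "scale_coord l (1 / 2) (scale_coord l 2 x) = x"
      by (rule eq_vecI) (use kl x in \<open>simp_all add: scale_coord_def\<close>)
    show "sh k l c (sh k l c x) = scale_coord l (1 / 2) (sh k l c (scale_coord l 2 x))"
      by (rule eq_vecI) (use kl x in \<open>simp_all add: sh_def scale_coord_def\<close>)
  qed
qed

lemma good_tr:
  assumes e: "bij_betw e {..<(N::nat)} (multi_idx n d)" and v: "v \<in> carrier_vec n"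
  shows "good N e n (\<lambda>x. x - v) 1"
proof -
  have mv: "- v \<in> carrier_vec n" using v by simp
  have "\<exists>kf. good N e n (\<lambda>x. x - v) kf" by (rule good_exists[OF e]) (rule pol_tr[OF v])
  then obtain kf where gf: "good N e n (\<lambda>x. x - v) kf" by blast
  have "\<exists>kf'. good N e n (\<lambda>x. x - (- v)) kf'" by (rule good_exists[OF e]) (rule pol_tr[OF mv])
  then obtain kf' where gf': "good N e n (\<lambda>x. x - (- v)) kf'" by blast
  have "\<exists>kg. good N e n (\<lambda>x. 2 \<cdot>\<^sub>v x) kg" by (rule good_exists[OF e]) (rule pol_hom)
  then obtain kg where gg: "good N e n (\<lambda>x. 2 \<cdot>\<^sub>v x) kg" by blast
  have "\<exists>kh. good N e n (\<lambda>x. (1/2) \<cdot>\<^sub>v x) kh" by (rule good_exists[OF e]) (rule pol_hom)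
  then obtain kh where gh: "good N e n (\<lambda>x. (1/2) \<cdot>\<^sub>v x) kh" by blast
  show ?thesis
  proof (rule factor_one[OF gf gf' gg gh])
    fix x :: "real vec" assume x: "dim_vec x = n"
    show "dim_vec (x - v) = n" using x v by simp
    show "dim_vec ((1/2) \<cdot>\<^sub>v x) = n" using x by simp
    show "x - v - - v = x"
      by (rule eq_vecI) (use x v in simp_all)
    show "2 \<cdot>\<^sub>v ((1 / 2) \<cdot>\<^sub>v x) = x"
      by (rule eq_vecI) (use x in simp_all)
    show "x - v - v = 2 \<cdot>\<^sub>v ((1 / 2) \<cdot>\<^sub>v x - v)"
      by (rule eq_vecI) (use x v in \<open>simp_all add: algebra_simps\<close>)
  qed
qed

lemma good_sw:
  assumes e: "bij_betw e {..<NN n d} (multi_idx n d)" and kl: "k \<noteq> l" "k < n" "l < n"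
  shows "good (NN n d) e n (sw k l) ((-1) ^ NN_pred (n + 1) d)"
proof -
  have d: "\<And>x c. dim_vec x = n \<Longrightarrow> dim_vec (sh k l c x) = n" "\<And>x c. dim_vec x = n \<Longrightarrow> dim_vec (sh l k c x) = n"
    by (auto simp: sh_def)
  have "good (NN n d) e n (\<lambda>x. scale_coord l (-1) (sh k l 1 (sh l k (-1) (sh k l 1 x))))
     ((-1) ^ NN_pred (n + 1) d * (1 * (1 * 1)))"
  proof -
    have g1: "good (NN n d) e n (sh k l 1) 1" by (rule good_sh[OF e kl])
    have g2: "good (NN n d) e n (sh l k (-1)) 1" by (rule good_sh[OF e]) (use kl in auto)
    have g3: "good (NN n d) e n (scale_coord l (-1)) ((-1) ^ NN_pred (n + 1) d)" by (rule good_scale[OF e kl(3)])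
    have g12: "good (NN n d) e n (\<lambda>x. sh l k (-1) (sh k l 1 x)) (1 * 1)"
      by (rule good_comp[OF g1 g2]) (simp add: sh_def)
    have g121: "good (NN n d) e n (\<lambda>x. sh k l 1 (sh l k (-1) (sh k l 1 x))) (1 * (1 * 1))"
      by (rule good_comp[OF g12 g1]) (simp add: sh_def)
    show ?thesis
      by (rule good_comp[OF g121 g3]) (simp add: sh_def)
  qed
  then have "good (NN n d) e n (\<lambda>x. scale_coord l (-1) (sh k l 1 (sh l k (-1) (sh k l 1 x))))
     ((-1) ^ NN_pred (n + 1) d)" by simp
  then show ?thesis
  proof (rule good_cong)
    fix x :: "real vec" assume x: "dim_vec x = n"
    show "scale_coord l (- 1) (sh k l 1 (sh l k (- 1) (sh k l 1 x))) = sw k l x"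
    proof (rule eq_vecI)
      fix i assume "i < dim_vec (sw k l x)"
      then have i: "i < dim_vec x" by (simp add: sw_def)
      show "scale_coord l (- 1) (sh k l 1 (sh l k (- 1) (sh k l 1 x))) $ i = sw k l x $ i"
        using i kl x by (simp add: sh_def sw_def scale_coord_def)
    qed (simp add: sh_def sw_def scale_coord_def)
  qed
qed

lemma matvec_sum:
  assumes "A \<in> carrier_mat n n" "dim_vec x = n" "i < n"
  shows "(A *\<^sub>v x) $ i = (\<Sum>j<n. A $$ (i, j) * x $ j)"
  using assms by (simp add: scalar_prod_def atLeast0LessThan)

lemma multrow_vec:
  assumes "dim_vec x = n" "p < n"
  shows "multrow_mat n p t *\<^sub>v x = scale_coord p t x"
proof (rule eq_vecI)
  fix i assume "i < dim_vec (scale_coord p t x)"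
  then have i: "i < n" using assms by (simp add: scale_coord_def)
  have "(multrow_mat n p t *\<^sub>v x) $ i = (\<Sum>j<n. if j = i then (if i = p then t else 1) * x $ j else 0)"
    unfolding matvec_sum[OF multrow_mat_carrier assms(1) i]
    by (rule sum.cong) (use i assms in \<open>auto simp: multrow_mat_def\<close>)
  also have "\<dots> = scale_coord p t x $ i" using i assms by (simp add: sum.delta scale_coord_def)
  finally show "(multrow_mat n p t *\<^sub>v x) $ i = scale_coord p t x $ i" .
qed (use assms in \<open>auto simp: scale_coord_def multrow_mat_def\<close>)

lemma addrow_vec:
  assumes "dim_vec x = n" "k \<noteq> l" "k < n" "l < n"
  shows "addrow_mat n c k l *\<^sub>v x = sh k l c x"
proof (rule eq_vecI)
  fix i assume "i < dim_vec (sh k l c x)"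
  then have i: "i < n" using assms by (simp add: sh_def)
  have "(addrow_mat n c k l *\<^sub>v x) $ i =
      (\<Sum>j<n. (if j = i then x $ j else 0) + (if j = l then (if i = k then c * x $ j else 0) else 0))"
    unfolding matvec_sum[OF addrow_mat_carrier assms(1) i]
    by (rule sum.cong) (use i assms in \<open>auto simp: addrow_mat_def\<close>)
  also have "\<dots> = sh k l c x $ i" using i assms by (simp add: sum.distrib sum.delta sh_def)
  finally show "(addrow_mat n c k l *\<^sub>v x) $ i = sh k l c x $ i" .
qed (use assms in \<open>auto simp: sh_def addrow_mat_def\<close>)

lemma swaprows_vec:
  assumes "dim_vec x = n" "k \<noteq> l" "k < n" "l < n"
  shows "swaprows_mat n k l *\<^sub>v x = sw k l x"
proof (rule eq_vecI)
  fix i assume "i < dim_vec (sw k l x)"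
  then have i: "i < n" using assms by (simp add: sw_def)
  let ?s = "if i = k then l else if i = l then k else i"
  have "(swaprows_mat n k l *\<^sub>v x) $ i = (\<Sum>j<n. if j = ?s then x $ j else 0)"
    unfolding matvec_sum[OF swaprows_mat_carrier assms(1) i]
    by (rule sum.cong) (use i assms in \<open>auto simp: swaprows_mat_def\<close>)
  also have "\<dots> = sw k l x $ i" using i assms by (simp add: sum.delta sw_def)
  finally show "(swaprows_mat n k l *\<^sub>v x) $ i = sw k l x $ i" .
qed (use assms in \<open>auto simp: sw_def swaprows_mat_def\<close>)

context
  fixes S :: "'a :: field mat set" and nr :: nat
  assumes S_carr: "\<And>P. P \<in> S \<Longrightarrow> P \<in> carrier_mat nr nr"
    and S_mult: "\<And>P Q. P \<in> S \<Longrightarrow> Q \<in> S \<Longrightarrow> P * Q \<in> S"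
    and S_one: "1\<^sub>m nr \<in> S"
    and S_add: "\<And>a k l. k < nr \<Longrightarrow> l < nr \<Longrightarrow> k \<noteq> l \<Longrightarrow> addrow_mat nr a k l \<in> S"
    and S_mul: "\<And>a k. k < nr \<Longrightarrow> a \<noteq> 0 \<Longrightarrow> multrow_mat nr k a \<in> S"
    and S_swap: "\<And>k l. k < nr \<Longrightarrow> l < nr \<Longrightarrow> k \<noteq> l \<Longrightarrow> swaprows_mat nr k l \<in> S"
begin

lemma S_prod_eliminate_entries: "i < nr \<Longrightarrow> (\<And> a i'. (a, i') \<in> set is \<Longrightarrow> i' < nr \<and> i' \<noteq> i)
  \<Longrightarrow> \<exists> P \<in> S. \<forall> B nc. B \<in> carrier_mat nr nc \<longrightarrow> eliminate_entries_rec B i is = P * B" 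
proof (induct "is")
  case Nil
  thus ?case by (intro bexI[of _ "1\<^sub>m nr"], auto simp: S_one)
next
  case (Cons ai' "is")
  obtain a i' where ai': "ai' = (a,i')" by force
  from Cons(1)[OF Cons(2-3)] 
  obtain P where P: "P \<in> S" and id: "\<And> B nc . B \<in> carrier_mat nr nc \<Longrightarrow> 
    eliminate_entries_rec B i is = P * B" by force
  let ?Add = "addrow_mat nr a i' i"
  have Add: "?Add \<in> S"
    by (rule S_add, insert Cons ai', auto)
  from S_mult[OF P Add] have PI: "P * ?Add \<in> S" .
  from S_carr[OF P] have P: "P \<in> carrier_mat nr nr" .
  show ?case
  proof (rule bexI[OF _ PI], intro allI impI)
    fix B :: "'a mat" and nc
    assume BB: "B \<in> carrier_mat nr nc"
    let ?B = "addrow a i' i B"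
    from BB have B: "?B \<in> carrier_mat nr nc" by simp
    from id[OF B] have id: "eliminate_entries_rec ?B i is = P * ?B" .
    have id2: "eliminate_entries_rec B i (ai' # is) = eliminate_entries_rec ?B i is" unfolding ai' by simp
    show "eliminate_entries_rec B i (ai' # is) = P * ?Add * B"
      unfolding id2 id unfolding addrow_mat[OF BB Cons(2)]
      by (rule assoc_mult_mat[symmetric, OF P _ BB], auto)
  qed
qed

lemma gauss_jordan_transform_S: assumes A: "A \<in> carrier_mat nr nc" and B: "B \<in> carrier_mat nr nc'"
  and res: "gauss_jordan (A :: 'a mat) B = (A',B')"
  shows "\<exists> P \<in> S. A' = P * A \<and> B' = P * B"
proof -
  {
    fix i j :: nat
    assume "gauss_jordan_main A B i j = (A',B')"
    with A B
    have "\<exists> P \<in> S. A' = P * A \<and> B' = P * B"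
    proof (induction A B i j rule: gauss_jordan_main.induct)
      case (1 A B i j)
      note A = 1(5)
      hence dim: "dim_row A = nr" "dim_col A = nc" by auto
      note B = 1(6)
      hence dimB: "dim_row B = nr" "dim_col B = nc'" by auto
      note IH = 1(1-4)[OF dim[symmetric]]
      note res = 1(7)
      note simp = gauss_jordan_main.simps[of A B i j] Let_def
      let ?g = "gauss_jordan_main A B i j"
      show ?case 
      proof (cases "i < nr \<and> j < nc")
        case False
        with res have res: "A' = A" "B' = B" unfolding simp dim by auto
        show ?thesis unfolding res
          by (rule bexI[of _ "1\<^sub>m nr"], insert A B, auto simp: S_one)
      next
        case True note valid = this
        note IH = IH[OF valid refl]
        show ?thesis 
        proof (cases "A $$ (i,j) = 0")
          case False note nZ = this
          note IH = IH(3-4)[OF nZ]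
          show ?thesis
          proof (cases "A $$ (i,j) = 1")
            case False note nO = this
            let ?inv = "inverse (A $$ (i,j))"
            from nO nZ valid res 
            have "gauss_jordan_main (multrow i ?inv A) (multrow i ?inv B) i j = (A',B')"
              unfolding simp dim by simp
            note IH = IH(2)[OF nO refl, unfolded multrow_carrier, OF A B this]
            from IH obtain P where P: "P \<in> S" and
              id: "A' = P * multrow i ?inv A" "B' = P * multrow i ?inv B" by blast
            let ?Inv = "multrow_mat nr i ?inv"
            from nZ valid have "i < nr" "?inv \<noteq> 0" by auto
            from S_mul[OF this]
            have Inv: "?Inv \<in> S" .
            from S_mult[OF P Inv] have PI: "P * ?Inv \<in> S" .
            from S_carr[OF P] have P: "P \<in> carrier_mat nr nr" .
            show ?thesis unfolding id unfolding multrow_mat[OF A] multrow_mat[OF B]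
              by (rule bexI[OF _ PI], intro conjI, 
                rule assoc_mult_mat[symmetric, OF P _ A], simp, 
                rule assoc_mult_mat[symmetric, OF P _ B], simp)
          next
            case True note O = this
            let ?is = "filter (\<lambda> i'. i' \<noteq> i) [0 ..< nr]" 
            let ?ais = "map (\<lambda> i'. (-A $$ (i',j), i')) ?is" 
            let ?E = "\<lambda> B. eliminate_entries (\<lambda> i. A $$ (i,j)) B i j"
            let ?EE = "\<lambda> B. eliminate_entries_rec B i ?ais"
            let ?A = "?E A"
            let ?B = "?E B"
            from O nZ valid res have "gauss_jordan_main ?A ?B (Suc i) (Suc j) = (A',B')"
              unfolding simp dim by simp
            note IH = IH(1)[OF O refl carrier_eliminate_entries(1)[OF A] carrier_eliminate_entries(1)[OF B] this]
            from IH obtain P where P: "P \<in> S" and id: "A' = P * ?A" "B' = P * ?B" by blast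
            have *: "j < dim_col A" "i < dim_row A" by (auto simp add: dim valid)
            have "\<exists>P\<in>S. \<forall> B nc. B \<in> carrier_mat nr nc \<longrightarrow> ?EE B = P * B"
              by (rule S_prod_eliminate_entries, insert valid, auto)
            then obtain Q where Q: "Q \<in> S" and QQ: "\<And> B nc. B \<in> carrier_mat nr nc \<Longrightarrow> ?EE B = Q * B" by auto
            {
              fix B :: "'a mat" and nc
              assume B: "B \<in> carrier_mat nr nc" 
              with dim have "dim_row B = dim_row A" by auto
              from eliminate_entries_convert[OF * this]
              have "?E B = ?EE B" using dim by simp
              also have "\<dots> = Q * B" using QQ[OF B] by simp
              finally have "?E B = Q * B" .
            } note QQ = this              
            have id3: "?A = Q * A" by (rule QQ[OF A])
            have id4: "?B = Q * B" by (rule QQ[OF B])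
            from S_carr[OF P] have Pc: "P \<in> carrier_mat nr nr" .
            from S_carr[OF Q] have Qc: "Q \<in> carrier_mat nr nr" .
            from S_mult[OF P Q] have PQ: "P * Q \<in> S" .
            show ?thesis unfolding id unfolding id3 id4 
              by (rule bexI[OF _ PQ], rule conjI, 
              rule assoc_mult_mat[symmetric, OF Pc Qc A],
              rule assoc_mult_mat[symmetric, OF Pc Qc B])
          qed
        next
          case True note Z = this
          note IH = IH(1-2)[OF Z]
          let ?is = "[ i' . i' <- [Suc i ..< nr],  A $$ (i',j) \<noteq> 0]"
          show ?thesis
          proof (cases ?is)
            case Nil 
            from Z valid res have id: "gauss_jordan_main A B i (Suc j) = (A',B')" unfolding simp dim Nil by simp
            from IH(1)[OF Nil A B this] show ?thesis unfolding id .
          next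
            case (Cons i' iis)
            from Z valid res have "gauss_jordan_main (swaprows i i' A) (swaprows i i' B) i j = (A',B')" 
              unfolding simp dim Cons by simp
            from IH(2)[OF Cons, unfolded swaprows_carrier, OF A B this]
            obtain P where P: "P \<in> S" and
              id: "A' = P * swaprows i i' A" "B' = P * swaprows i i' B" by blast
            let ?Swap = "swaprows_mat nr i i'"
            from Cons have "i' \<in> set ?is" by auto
            with valid have i': "i < nr" "i' < nr" "i \<noteq> i'" by auto
            from S_swap[OF this] have Swap: "?Swap \<in> S" .
            from S_mult[OF P Swap] have PI: "P * ?Swap \<in> S" .
            from S_carr[OF P] have P: "P \<in> carrier_mat nr nr" .
            show ?thesis unfolding id swaprows_mat[OF A i'(1,2)] swaprows_mat[OF B i'(1,2)]
              by (rule bexI[OF _ PI], rule conjI, 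
              rule assoc_mult_mat[symmetric, OF P _ A], simp,
              rule assoc_mult_mat[symmetric, OF P _ B], simp)
          qed
        qed
      qed
    qed
  }
  from this[of 0 0, folded gauss_jordan_def, OF res] show ?thesis .
qed

end

lemma monom_zero_sum: "sum_list j = 0 \<Longrightarrow> monom_pow x j = 1"
  unfolding monom_pow_def by (intro prod.neutral) (auto simp: sum_list_eq_0_iff dest!: nth_mem)

lemma detV_d0:
  assumes e: "bij_betw e {..<NN n 0} (multi_idx n 0)"
  shows "det (vandermonde (NN n 0) e b) = 1"
proof -
  have N: "NN n 0 = 1" by (simp add: NN_def)
  have "e 0 \<in> multi_idx n 0" using e N unfolding bij_betw_def by auto
  then have "sum_list (e 0) = 0" unfolding multi_idx_def by simp
  then have "vandermonde (NN n 0) e b = 1\<^sub>m 1"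
    unfolding N vandermonde_def by (intro eq_matI) (auto simp: monom_zero_sum)
  then show ?thesis by simp
qed

context
  fixes n d :: nat and e :: "nat \<Rightarrow> nat list"
  assumes e: "bij_betw e {..<NN n d} (multi_idx n d)"
begin

definition G0 :: "real mat set" where
  "G0 = {P \<in> carrier_mat n n. good (NN n d) e n (\<lambda>x. P *\<^sub>v x) (det P ^ NN_pred (n + 1) d)}"

lemma G0_one: "1\<^sub>m n \<in> G0"
proof -
  have "good (NN n d) e n (\<lambda>x. 1\<^sub>m n *\<^sub>v x) 1"
    by (rule good_cong[OF good_id], rule one_mult_mat_vec[symmetric], rule carrier_vecI)
  then show ?thesis unfolding G0_def by simp
qed

lemma G0_mult:
  assumes "P \<in> G0" "Q \<in> G0"
  shows "P * Q \<in> G0"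
proof -
  have P: "P \<in> carrier_mat n n" and Q: "Q \<in> carrier_mat n n" using assms unfolding G0_def by auto
  have gP: "good (NN n d) e n (\<lambda>x. P *\<^sub>v x) (det P ^ NN_pred (n + 1) d)"
    and gQ: "good (NN n d) e n (\<lambda>x. Q *\<^sub>v x) (det Q ^ NN_pred (n + 1) d)"
    using assms unfolding G0_def by auto
  have "good (NN n d) e n (\<lambda>x. P *\<^sub>v (Q *\<^sub>v x)) (det P ^ NN_pred (n + 1) d * det Q ^ NN_pred (n + 1) d)"
    by (rule good_comp[OF gQ gP]) (use Q in simp)
  then have "good (NN n d) e n (\<lambda>x. (P * Q) *\<^sub>v x) (det P ^ NN_pred (n + 1) d * det Q ^ NN_pred (n + 1) d)"
  proof (rule good_cong)
    fix x :: "real vec" assume "dim_vec x = n"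
    then have x: "x \<in> carrier_vec n" by (rule carrier_vecI)
    show "P *\<^sub>v (Q *\<^sub>v x) = (P * Q) *\<^sub>v x" by (rule assoc_mult_mat_vec[symmetric, OF P Q x])
  qed
  then have "good (NN n d) e n (\<lambda>x. (P * Q) *\<^sub>v x) (det (P * Q) ^ NN_pred (n + 1) d)"
    by (simp add: det_mult[OF P Q] power_mult_distrib)
  then show ?thesis unfolding G0_def using P Q by auto
qed

lemma G0_multrow: assumes k: "k < n" shows "multrow_mat n k t \<in> G0"
proof -
  have "good (NN n d) e n (\<lambda>x. multrow_mat n k t *\<^sub>v x) (t ^ NN_pred (n + 1) d)"
    by (rule good_cong[OF good_scale[OF e k]]) (simp add: multrow_vec[OF _ k])
  then show ?thesis unfolding G0_def using k by (simp add: det_multrow_mat)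
qed

lemma G0_addrow: assumes kl: "k < n" "l < n" "k \<noteq> l" shows "addrow_mat n c k l \<in> G0"
proof -
  have "good (NN n d) e n (\<lambda>x. addrow_mat n c k l *\<^sub>v x) 1"
    by (rule good_cong[OF good_sh[OF e kl(3,1,2)]]) (simp add: addrow_vec[OF _ kl(3,1,2)])
  then show ?thesis unfolding G0_def using kl by (simp add: det_addrow_mat)
qed

lemma G0_swap: assumes kl: "k < n" "l < n" "k \<noteq> l" shows "swaprows_mat n k l \<in> G0"
proof -
  have "good (NN n d) e n (\<lambda>x. swaprows_mat n k l *\<^sub>v x) ((-1) ^ NN_pred (n + 1) d)"
    by (rule good_cong[OF good_sw[OF e kl(3,1,2)]]) (simp add: swaprows_vec[OF _ kl(3,1,2)])
  then show ?thesis unfolding G0_def using kl by (simp add: det_swaprows_mat)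
qed

definition S1 :: "real mat set" where
  "S1 = {P \<in> carrier_mat n n. \<exists>Q \<in> G0. Q * P = 1\<^sub>m n}"

lemma G0_carr: "Q \<in> G0 \<Longrightarrow> Q \<in> carrier_mat n n" unfolding G0_def by auto

lemma S1_mult: assumes "P1 \<in> S1" "P2 \<in> S1" shows "P1 * P2 \<in> S1"
proof -
  obtain Q1 Q2 where Q: "Q1 \<in> G0" "Q2 \<in> G0" "Q1 * P1 = 1\<^sub>m n" "Q2 * P2 = 1\<^sub>m n"
    and P: "P1 \<in> carrier_mat n n" "P2 \<in> carrier_mat n n"
    using assms unfolding S1_def by auto
  have Qc: "Q1 \<in> carrier_mat n n" "Q2 \<in> carrier_mat n n" using Q G0_carr by auto
  have "(Q2 * Q1) * (P1 * P2) = Q2 * (Q1 * (P1 * P2))"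
    by (rule assoc_mult_mat[OF Qc(2) Qc(1) mult_carrier_mat[OF P]])
  also have "Q1 * (P1 * P2) = (Q1 * P1) * P2"
    by (rule assoc_mult_mat[OF Qc(1) P, symmetric])
  finally have "(Q2 * Q1) * (P1 * P2) = 1\<^sub>m n" using Q P by simp
  then show ?thesis unfolding S1_def using G0_mult[OF Q(2,1)] P by auto
qed

lemma G0_all:
  assumes P: "P \<in> carrier_mat n n"
  shows "P \<in> G0"
proof -
  obtain R B' where gj: "gauss_jordan P (1\<^sub>m n) = (R, B')" by (cases "gauss_jordan P (1\<^sub>m n)")
  have "\<exists>Pm\<in>S1. R = Pm * P \<and> B' = Pm * 1\<^sub>m n"
  proof (rule gauss_jordan_transform_S[OF _ _ _ _ _ _ P one_carrier_mat gj])
    show "\<And>P. P \<in> S1 \<Longrightarrow> P \<in> carrier_mat n n" unfolding S1_def by blast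
    show "\<And>P Q. P \<in> S1 \<Longrightarrow> Q \<in> S1 \<Longrightarrow> P * Q \<in> S1" by (rule S1_mult)
    have "1\<^sub>m n * 1\<^sub>m n = (1\<^sub>m n :: real mat)" by simp
    then show "1\<^sub>m n \<in> S1" unfolding S1_def using G0_one one_carrier_mat by blast
    show "addrow_mat n a k l \<in> S1" if "k < n" "l < n" "k \<noteq> l" for a k l
    proof -
      have "addrow_mat n (-a) k l * addrow_mat n (- (-a)) k l = (1\<^sub>m n :: real mat)"
        by (rule addrow_mat_inv[OF that])
      then have "addrow_mat n (-a) k l * addrow_mat n a k l = (1\<^sub>m n :: real mat)" by simp
      then show ?thesis unfolding S1_def using G0_addrow[OF that] addrow_mat_carrier by blast
    qed
    show "multrow_mat n k a \<in> S1" if "k < n" "a \<noteq> 0" for a k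
    proof -
      have "inverse a \<noteq> 0" using that by simp
      from multrow_mat_inv[OF that(1) this]
      have "multrow_mat n k (inverse a) * multrow_mat n k a = (1\<^sub>m n :: real mat)" using that by simp
      then show ?thesis unfolding S1_def using G0_multrow[OF that(1)] multrow_mat_carrier by blast
    qed
    show "swaprows_mat n k l \<in> S1" if "k < n" "l < n" "k \<noteq> l" for k l
    proof -
      have "swaprows_mat n k l * swaprows_mat n k l = (1\<^sub>m n :: real mat)"
        by (rule swaprows_mat_inv[OF that(1,2)])
      then show ?thesis unfolding S1_def using G0_swap[OF that] swaprows_mat_carrier by blast
    qed
  qed
  then obtain Pm where Pm: "Pm \<in> S1" "R = Pm * P" by blast
  then obtain Q where Q: "Q \<in> G0" "Q * Pm = 1\<^sub>m n" and Pmc: "Pm \<in> carrier_mat n n"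
    unfolding S1_def by blast
  have Qc: "Q \<in> carrier_mat n n" by (rule G0_carr[OF Q(1)])
  have Rc: "R \<in> carrier_mat n n" using gauss_jordan_carrier(1)[OF P one_carrier_mat gj] .
  have re: "row_echelon_form R" by (rule gauss_jordan_row_echelon[OF P gj])
  have "Q * R = (Q * Pm) * P" unfolding Pm(2) by (rule assoc_mult_mat[OF Qc Pmc P, symmetric])
  then have PQR: "P = Q * R" using Q(2) P by simp
  have "R \<in> G0"
  proof (cases "R = 1\<^sub>m n")
    case True then show ?thesis using G0_one by simp
  next
    case False
    with row_echelon_form_imp_1_or_0_row[OF Rc re]
    have n0: "n > 0" and row0: "row R (n - 1) = 0\<^sub>v n" by auto
    let ?M = "multrow_mat n (n - 1) (0::real)"
    have mr: "multrow (n - 1) 0 R = R"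
    proof (rule eq_matI)
      fix i j assume "i < dim_row R" "j < dim_col R"
      then have i: "i < n" and j: "j < n" using Rc by auto
      have "R $$ (n - 1, j) = row R (n - 1) $ j" using j Rc n0 by simp
      then have "R $$ (n - 1, j) = 0" using row0 j by simp
      then show "multrow (n - 1) 0 R $$ (i, j) = R $$ (i, j)" using i j Rc by auto
    qed auto
    have "multrow (n - 1) 0 R = ?M * R" by (rule multrow_mat[OF Rc]; use n0 in simp)
    with mr have RM: "?M * R = R" by simp
    have "det (?M * R) = det ?M * det R" by (rule det_mult[OF multrow_mat_carrier Rc])
    then have "det R = 0 * det R" using n0 RM by (simp add: det_multrow_mat)
    then have dR: "det R = 0" by simp
    show ?thesis
    proof (cases "d = 0")
      case True
      have d1: "\<And>b. det (vandermonde (NN n d) e b) = 1"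
        using detV_d0[of e n] e True by simp
      have "good (NN n d) e n (\<lambda>x. R *\<^sub>v x) 1"
        unfolding good_def by (simp add: d1)
      then show ?thesis unfolding G0_def using Rc True by (simp add: NN_pred_def)
    next
      case False
      then have Spos: "NN_pred (n + 1) d > 0" by (simp add: NN_pred_def NN_def)
      have gM: "good (NN n d) e n (\<lambda>x. ?M *\<^sub>v x) (0 ^ NN_pred (n + 1) d)"
        using G0_multrow[of "n - 1" 0] n0 unfolding G0_def by (simp add: det_multrow_mat)
      have "good (NN n d) e n (\<lambda>x. R *\<^sub>v x) 0"
        unfolding good_def
      proof (intro allI impI)
        fix b :: "nat \<Rightarrow> real vec" assume b: "\<forall>i<NN n d. dim_vec (b i) = n"
        have eqv: "?M *\<^sub>v (R *\<^sub>v b i) = R *\<^sub>v b i" if i: "i < NN n d" for i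
        proof -
          have x: "b i \<in> carrier_vec n" using b i by (intro carrier_vecI) simp
          have "?M *\<^sub>v (R *\<^sub>v b i) = (?M * R) *\<^sub>v b i"
            by (rule assoc_mult_mat_vec[symmetric, OF multrow_mat_carrier Rc x])
          then show ?thesis unfolding RM .
        qed
        have dimR: "\<And>i. i < NN n d \<Longrightarrow> dim_vec (R *\<^sub>v b i) = n" using Rc by simp
        have "vandermonde (NN n d) e (\<lambda>i. R *\<^sub>v b i) = vandermonde (NN n d) e (\<lambda>i. ?M *\<^sub>v (R *\<^sub>v b i))"
          unfolding vandermonde_def by (rule cong_mat) (simp_all only: prod.case eqv)
        also have "det \<dots> = 0 ^ NN_pred (n + 1) d * det (vandermonde (NN n d) e (\<lambda>i. R *\<^sub>v b i))"
          by (rule gM[unfolded good_def, rule_format, OF dimR])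
        finally show "det (vandermonde (NN n d) e (\<lambda>i. R *\<^sub>v b i)) = 0 * det (vandermonde (NN n d) e b)"
          using Spos by (simp add: power_0_left)
      qed
      then show ?thesis unfolding G0_def using Rc dR Spos by (simp add: power_0_left)
    qed
  qed
  then show ?thesis using G0_mult[OF Q(1)] PQR by simp
qed

end

theorem proposition2p3:
  fixes n d :: nat and e :: "nat \<Rightarrow> nat list" and a :: "nat \<Rightarrow> real vec"
  assumes "n \<ge> 1"
    and e: "bij_betw e {..<NN n d} (multi_idx n d)"
    and dims: "\<And>i. i < NN n d \<Longrightarrow> dim_vec (a i) = n"
    and distinct: "inj_on a {..<NN n d}"
  shows "(\<forall>p<n. \<forall>t::real.
            det (vandermonde (NN n d) e (\<lambda>i. scale_coord p t (a i)))
              = t ^ NN_pred (n + 1) d * det (vandermonde (NN n d) e a))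
       \<and> (\<forall>P \<in> carrier_mat n n.
            det (vandermonde (NN n d) e (\<lambda>i. P *\<^sub>v a i))
              = det P ^ NN_pred (n + 1) d * det (vandermonde (NN n d) e a))
       \<and> (\<forall>v \<in> carrier_vec n.
            det (vandermonde (NN n d) e (\<lambda>i. a i - v))
              = det (vandermonde (NN n d) e a))"
proof (intro conjI allI impI ballI)
  have da: "\<forall>i<NN n d. dim_vec (a i) = n" using dims by blast
  show "det (vandermonde (NN n d) e (\<lambda>i. scale_coord p t (a i)))
      = t ^ NN_pred (n + 1) d * det (vandermonde (NN n d) e a)" if "p < n" for p and t :: real
    using good_scale[OF e that, of t] da unfolding good_def by blast
  show "det (vandermonde (NN n d) e (\<lambda>i. P *\<^sub>v a i))
      = det P ^ NN_pred (n + 1) d * det (vandermonde (NN n d) e a)" if "P \<in> carrier_mat n n" for P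
    using G0_all[OF e that] da unfolding G0_def[OF e] good_def by blast
  show "det (vandermonde (NN n d) e (\<lambda>i. a i - v)) = det (vandermonde (NN n d) e a)"
    if "v \<in> carrier_vec n" for v
    using good_tr[OF e that] da unfolding good_def by simp
qed

end
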